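(* Let $\mathcal B\subseteq P(D)$ be a Boolean algebra with $|\mathcal B|<\mathfrak b$ and $\mathcal A_0\subseteq\mathcal B$, and let $\nu$ be a finitely additive almost strictly positive probability measure on $\mathcal B$ extending $\mu_0$. Let $\mathcal S=\{S_n:n\in\omega\}$ be an $s$-family. Then there exists $g\in\omega^\omega$ such that, for $X_g=\bigcup_{n\in\omega}S_n(g(n))$, the set $D\setminus X_g$ is infinite and $\nu$ extends to an almost strictly positive finitely additive measure on the algebra $\mathcal B[X_g]$ generated by $\mathcal B\cup\{X_g\}$.
   Context: $\mathfrak b$ is the bounding number. $\lambda$ is the product measure on $2^\omega$, $D\subseteq 2^\omega$ a fixed countable dense set, $\mathcal A_0$ the subalgebra of $P(D)$ generated by $\{C\cap D: C \text{ clopen}\}$ and the finite subsets of $D$, $\mu_0$ the finitely additive measure on $\mathcal A_0$ with $\mu_0((C\cap D)\triangle F)=\lambda(C)$ for $C$ clopen, $F$ finite. An $s$-family is a countable family $\mathcal S$ of sequences $(S(k))_{k\in\omega}$ of elements of $\mathcal A_0$ with $S(0)\supseteq S(1)\supseteq\cdots$, $\bigcap_kS(k)=\emptyset$, $\lim_k\mu_0(S(k))=0$. A finitely additive measure on an algebra $\mathcal C\subseteq P(D)$ is almost strictly positive if for $C\in\mathcal C$, its value at $C$ is $0$ iff $C$ is finite. *)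

theory Defs
  imports "HOL-Probability.Probability"
begin

text \<open>Cantor space 2^omega is the type nat => bool with the product topology
 (bool carries its order topology, which is discrete).\<close>

definition cantor_clopen :: "(nat \<Rightarrow> bool) set \<Rightarrow> bool" where
  "cantor_clopen C \<longleftrightarrow> open C \<and> closed C"

definition cantor_measure :: "(nat \<Rightarrow> bool) measure" where
  "cantor_measure = (\<Pi>\<^sub>M i\<in>(UNIV::nat set). measure_pmf (pmf_of_set (UNIV::bool set)))"

definition lam :: "(nat \<Rightarrow> bool) set \<Rightarrow> real" where
  "lam C = measure cantor_measure C"

definition sdiff :: "'a set \<Rightarrow> 'a set \<Rightarrow> 'a set" where
  "sdiff A B = (A - B) \<union> (B - A)"

definition is_alg :: "'a set \<Rightarrow> 'a set set \<Rightarrow> bool" where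
  "is_alg D B \<longleftrightarrow> B \<subseteq> Pow D \<and> {} \<in> B \<and> (\<forall>a\<in>B. D - a \<in> B) \<and> (\<forall>a\<in>B. \<forall>b\<in>B. a \<union> b \<in> B)"

definition gen_alg :: "'a set \<Rightarrow> 'a set set \<Rightarrow> 'a set set" where
  "gen_alg D G = \<Inter>{B. is_alg D B \<and> G \<subseteq> B}"

definition A0 :: "(nat \<Rightarrow> bool) set \<Rightarrow> (nat \<Rightarrow> bool) set set" where
  "A0 D = gen_alg D ({C \<inter> D | C. cantor_clopen C} \<union> {F. finite F \<and> F \<subseteq> D})"

definition mu0 :: "(nat \<Rightarrow> bool) set \<Rightarrow> (nat \<Rightarrow> bool) set \<Rightarrow> real" where
  "mu0 D A = (SOME r. \<exists>C F. cantor_clopen C \<and> finite F \<and> F \<subseteq> D \<and>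
                 A = sdiff (C \<inter> D) F \<and> r = lam C)"

definition fin_add_measure :: "'a set set \<Rightarrow> ('a set \<Rightarrow> real) \<Rightarrow> bool" where
  "fin_add_measure B m \<longleftrightarrow> (\<forall>a\<in>B. 0 \<le> m a) \<and>
     (\<forall>a\<in>B. \<forall>b\<in>B. a \<inter> b = {} \<longrightarrow> m (a \<union> b) = m a + m b)"

definition almost_strictly_positive :: "'a set set \<Rightarrow> ('a set \<Rightarrow> real) \<Rightarrow> bool" where
  "almost_strictly_positive B m \<longleftrightarrow> (\<forall>a\<in>B. m a = 0 \<longleftrightarrow> finite a)"

text \<open>|A| < b, the bounding number: |A| is smaller than the cardinality of every
 unbounded family in omega^omega (unbounded w.r.t. eventual domination).\<close>
definition dominated :: "(nat \<Rightarrow> nat) set \<Rightarrow> bool" where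
  "dominated F \<longleftrightarrow> (\<exists>g. \<forall>f\<in>F. \<exists>N. \<forall>n\<ge>N. f n \<le> g n)"

definition card_less_b :: "'a set \<Rightarrow> bool" where
  "card_less_b A \<longleftrightarrow> (\<forall>F::(nat \<Rightarrow> nat) set. \<not> dominated F \<longrightarrow> (card_of A, card_of F) \<in> ordLess)"

text \<open>s-family indexed as S n k (n-th sequence, k-th term).\<close>
definition s_family :: "(nat \<Rightarrow> bool) set \<Rightarrow> (nat \<Rightarrow> nat \<Rightarrow> (nat \<Rightarrow> bool) set) \<Rightarrow> bool" where
  "s_family D S \<longleftrightarrow> (\<forall>n. (\<forall>k. S n k \<in> A0 D) \<and> (\<forall>k. S n (Suc k) \<subseteq> S n k) \<and>
      (\<Inter>k. S n k) = {} \<and> (\<lambda>k. mu0 D (S n k)) \<longlonglongrightarrow> 0)"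

end

theory Submission
  imports Defs
begin

locale LL =
  fixes D :: "'a set" and B :: "'a set set" and \<nu> :: "'a set \<Rightarrow> real"
    and S :: "nat \<Rightarrow> nat \<Rightarrow> 'a set"
  assumes alg: "is_alg D B" and fam: "fin_add_measure B \<nu>"
    and asp: "almost_strictly_positive B \<nu>" and nuD: "\<nu> D = 1"
    and finB: "\<And>F. finite F \<Longrightarrow> F \<subseteq> D \<Longrightarrow> F \<in> B"
    and SB: "\<And>n k. S n k \<in> B" and Sdec: "\<And>n k. S n (Suc k) \<subseteq> S n k"
    and Sint: "\<And>n. (\<Inter>k. S n k) = {}" and Slim: "\<And>n. (\<lambda>k. \<nu> (S n k)) \<longlonglongrightarrow> 0"
begin

lemma B_sub: "b \<in> B \<Longrightarrow> b \<subseteq> D" using alg unfolding is_alg_def by auto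
lemma B_empty: "{} \<in> B" using alg unfolding is_alg_def by auto
lemma B_compl: "b \<in> B \<Longrightarrow> D - b \<in> B" using alg unfolding is_alg_def by auto
lemma B_Un: "a \<in> B \<Longrightarrow> b \<in> B \<Longrightarrow> a \<union> b \<in> B" using alg unfolding is_alg_def by auto
lemma B_D: "D \<in> B" using B_compl[OF B_empty] by simp
lemma B_Int: "a \<in> B \<Longrightarrow> b \<in> B \<Longrightarrow> a \<inter> b \<in> B"
proof -
  assume a: "a \<in> B" and b: "b \<in> B"
  have "a \<inter> b = D - ((D - a) \<union> (D - b))" using B_sub[OF a] B_sub[OF b] by auto
  thus ?thesis using a b by (simp add: B_compl B_Un)
qed
lemma B_Diff: "a \<in> B \<Longrightarrow> b \<in> B \<Longrightarrow> a - b \<in> B"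
proof -
  assume a: "a \<in> B" and b: "b \<in> B"
  have "a - b = a \<inter> (D - b)" using B_sub[OF a] by auto
  thus ?thesis using a b by (simp add: B_compl B_Int)
qed

lemma nu_add: "a \<in> B \<Longrightarrow> b \<in> B \<Longrightarrow> a \<inter> b = {} \<Longrightarrow> \<nu> (a \<union> b) = \<nu> a + \<nu> b"
  using fam unfolding fin_add_measure_def by auto
lemma nu_nonneg: "a \<in> B \<Longrightarrow> 0 \<le> \<nu> a"
  using fam unfolding fin_add_measure_def by auto
lemma nu_zero_iff: "a \<in> B \<Longrightarrow> \<nu> a = 0 \<longleftrightarrow> finite a"
  using asp unfolding almost_strictly_positive_def by auto
lemma nu_pos: "a \<in> B \<Longrightarrow> infinite a \<Longrightarrow> 0 < \<nu> a"
  using nu_zero_iff nu_nonneg by (metis order_le_less)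
lemma nu_split: "a \<in> B \<Longrightarrow> b \<in> B \<Longrightarrow> \<nu> a = \<nu> (a \<inter> b) + \<nu> (a - b)"
proof -
  assume a: "a \<in> B" and b: "b \<in> B"
  have "a = (a \<inter> b) \<union> (a - b)" by auto
  hence "\<nu> a = \<nu> ((a \<inter> b) \<union> (a - b))" by simp
  also have "\<dots> = \<nu> (a \<inter> b) + \<nu> (a - b)"
    by (rule nu_add) (auto simp: a b B_Int B_Diff)
  finally show ?thesis .
qed
lemma nu_mono: "a \<in> B \<Longrightarrow> b \<in> B \<Longrightarrow> a \<subseteq> b \<Longrightarrow> \<nu> a \<le> \<nu> b"
proof -
  assume a: "a \<in> B" and b: "b \<in> B" and ab: "a \<subseteq> b"
  have "b \<inter> a = a" using ab by auto
  thus ?thesis using nu_split[OF b a] nu_nonneg[OF B_Diff[OF b a]] by simp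
qed
lemma nu_le1: "a \<in> B \<Longrightarrow> \<nu> a \<le> 1"
  using nu_mono[OF _ B_D] B_sub nuD by auto
lemma nu_Un_le: "a \<in> B \<Longrightarrow> b \<in> B \<Longrightarrow> \<nu> (a \<union> b) \<le> \<nu> a + \<nu> b"
proof -
  assume a: "a \<in> B" and b: "b \<in> B"
  have "a \<union> b = a \<union> (b - a)" by auto
  hence "\<nu> (a \<union> b) = \<nu> a + \<nu> (b - a)" using nu_add[OF a B_Diff[OF b a]] by auto
  moreover have "\<nu> (b - a) \<le> \<nu> b" using nu_mono a b B_Diff by auto
  ultimately show ?thesis by simp
qed
lemma nu_Diff_ge: "a \<in> B \<Longrightarrow> b \<in> B \<Longrightarrow> \<nu> (a - b) \<ge> \<nu> a - \<nu> b"
  using nu_split[of a b] nu_mono[of "a \<inter> b" b] B_Int by auto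
lemma nu_finite: "a \<in> B \<Longrightarrow> finite a \<Longrightarrow> \<nu> a = 0" using nu_zero_iff by auto

lemma Smono: "k \<le> k' \<Longrightarrow> S n k' \<subseteq> S n k"
  by (induct k' rule: dec_induct) (use Sdec in auto)

lemma S_exit: "\<exists>k. x \<notin> S n k" using Sint[of n] by auto

lemma fin_to_empty:
  assumes "finite (A \<inter> S m k0)"
  shows "\<exists>k. A \<inter> S m k = {}"
proof -
  define F where "F = A \<inter> S m k0"
  define kx where "kx x = (SOME k. x \<notin> S m k)" for x
  have kx: "x \<notin> S m (kx x)" for x unfolding kx_def by (rule someI_ex[OF S_exit])
  obtain K where K: "\<forall>x\<in>F. kx x \<le> K"
    using assms finite_nat_set_iff_bounded_le[of "kx ` F"] unfolding F_def by auto
  have "A \<inter> S m (max k0 K) = {}"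
  proof (rule ccontr)
    assume "A \<inter> S m (max k0 K) \<noteq> {}"
    then obtain x where x: "x \<in> A" "x \<in> S m (max k0 K)" by auto
    hence "x \<in> F" unfolding F_def using Smono[of k0 "max k0 K" m] by auto
    hence "kx x \<le> max k0 K" using K by auto
    hence "S m (max k0 K) \<subseteq> S m (kx x)" by (rule Smono)
    thus False using x kx[of x] by blast
  qed
  thus ?thesis by blast
qed

definition U :: "nat \<Rightarrow> (nat \<Rightarrow> nat) \<Rightarrow> 'a set" where
  "U j \<sigma> = (\<Union>i\<in>{..<j}. S i (\<sigma> i))"

lemma U_B: "U j \<sigma> \<in> B"
  by (induct j) (auto simp: U_def lessThan_Suc B_empty B_Un SB)

lemma U_Suc: "U (Suc j) \<sigma> = U j \<sigma> \<union> S j (\<sigma> j)"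
  by (auto simp: U_def lessThan_Suc)

lemma U_mono: "j \<le> j' \<Longrightarrow> U j \<sigma> \<subseteq> U j' \<sigma>"
  unfolding U_def by (fastforce intro: less_le_trans)

lemma U_restrict: "U L (restrict g {..<L}) = U L g"
  unfolding U_def by auto


lemma exists_small: "0 < e \<Longrightarrow> \<exists>k. \<nu> (S m k) \<le> e"
proof -
  assume e: "0 < e"
  have "eventually (\<lambda>k. \<nu> (S m k) < e) sequentially"
    using order_tendstoD(2)[OF Slim e] .
  then obtain k where "\<nu> (S m k) < e" using eventually_sequentially by auto
  thus ?thesis by (intro exI[of _ k]) simp
qed

lemma nuS_mono: "k \<le> k' \<Longrightarrow> \<nu> (S m k') \<le> \<nu> (S m k)"
  using nu_mono[OF SB SB Smono] by auto

definition kd :: "nat \<Rightarrow> 'a \<Rightarrow> nat" where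
  "kd m d = (LEAST k. d \<notin> S m k)"
definition fA :: "'a set \<Rightarrow> nat \<Rightarrow> nat" where
  "fA C m = (if \<exists>k. C \<inter> S m k = {} then LEAST k. C \<inter> S m k = {} else 0)"
definition kP :: "'a set \<Rightarrow> nat \<Rightarrow> nat \<Rightarrow> (nat \<Rightarrow> nat) \<Rightarrow> nat" where
  "kP C m L \<sigma> = (if infinite (C - U L \<sigma>) then LEAST k. \<nu> (S m k) \<le> \<nu> (C - U L \<sigma>) / 2^(m+2) else 0)"
definition dpt :: "'a set \<Rightarrow> nat \<Rightarrow> (nat \<Rightarrow> nat) \<Rightarrow> 'a" where
  "dpt C L \<sigma> = (SOME d. d \<in> C - U L \<sigma>)"
definition kQ :: "'a set \<Rightarrow> nat \<Rightarrow> nat \<Rightarrow> (nat \<Rightarrow> nat) \<Rightarrow> nat" where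
  "kQ C m L \<sigma> = (if infinite (C - U L \<sigma>) then kd m (dpt C L \<sigma>) else 0)"
definition Phi :: "'a set \<Rightarrow> nat \<Rightarrow> nat \<Rightarrow> nat" where
  "Phi C m v = fA C m + (\<Sum>L\<le>m. \<Sum>\<sigma>\<in>PiE {..<L} (\<lambda>_. {..v}). kP C m L \<sigma> + kQ C m L \<sigma>)"
definition f1 :: "nat \<Rightarrow> nat" where
  "f1 m = (LEAST k. \<nu> (S m k) \<le> 1 / 2^(m+2))"

lemma kd: "d \<notin> S m (kd m d)"
  unfolding kd_def by (rule LeastI_ex[OF S_exit])

lemma f1: "f1 m \<le> k \<Longrightarrow> \<nu> (S m k) \<le> 1 / 2^(m+2)"
proof -
  assume k: "f1 m \<le> k"
  have "\<nu> (S m (f1 m)) \<le> 1 / 2^(m+2)"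
    unfolding f1_def by (rule LeastI_ex[OF exists_small]) simp
  thus ?thesis using nuS_mono[OF k, where m=m] by linarith
qed

lemma fA: "\<exists>k. C \<inter> S m k = {} \<Longrightarrow> fA C m \<le> k \<Longrightarrow> C \<inter> S m k = {}"
proof -
  assume ex: "\<exists>k. C \<inter> S m k = {}" and k: "fA C m \<le> k"
  have "C \<inter> S m (LEAST k. C \<inter> S m k = {}) = {}" by (rule LeastI_ex[OF ex])
  hence "C \<inter> S m (fA C m) = {}" unfolding fA_def using ex by simp
  thus ?thesis using Smono[OF k] by blast
qed

lemma kP: assumes inf: "infinite (C - U L \<sigma>)" and C: "C \<in> B" and k: "kP C m L \<sigma> \<le> k"
  shows "\<nu> (S m k) \<le> \<nu> (C - U L \<sigma>) / 2^(m+2)"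
proof -
  have pos: "0 < \<nu> (C - U L \<sigma>) / 2^(m+2)" using nu_pos[OF B_Diff[OF C U_B] inf] by simp
  have "\<nu> (S m (LEAST k. \<nu> (S m k) \<le> \<nu> (C - U L \<sigma>) / 2^(m+2))) \<le> \<nu> (C - U L \<sigma>) / 2^(m+2)"
    by (rule LeastI_ex[OF exists_small[OF pos]])
  hence "\<nu> (S m (kP C m L \<sigma>)) \<le> \<nu> (C - U L \<sigma>) / 2^(m+2)"
    unfolding kP_def using inf by simp
  thus ?thesis using nuS_mono[OF k, where m=m] by linarith
qed

lemma dpt: "infinite (C - U L \<sigma>) \<Longrightarrow> dpt C L \<sigma> \<in> C - U L \<sigma>"
  unfolding dpt_def by (rule someI_ex) (metis finite.emptyI ex_in_conv)

lemma Phi_ge: assumes "L \<le> m" "\<sigma> \<in> PiE {..<L} (\<lambda>_. {..v})"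
  shows "fA C m \<le> Phi C m v" "kP C m L \<sigma> \<le> Phi C m v" "kQ C m L \<sigma> \<le> Phi C m v"
proof -
  show "fA C m \<le> Phi C m v" unfolding Phi_def by simp
  have "kP C m L \<sigma> + kQ C m L \<sigma> \<le> (\<Sum>\<sigma>\<in>PiE {..<L} (\<lambda>_. {..v}). kP C m L \<sigma> + kQ C m L \<sigma>)"
    by (rule member_le_sum) (use assms in \<open>auto intro: finite_PiE\<close>)
  also have "\<dots> \<le> (\<Sum>L\<le>m. \<Sum>\<sigma>\<in>PiE {..<L} (\<lambda>_. {..v}). kP C m L \<sigma> + kQ C m L \<sigma>)"
    by (rule member_le_sum[where f = "\<lambda>L. \<Sum>\<sigma>\<in>PiE {..<L} (\<lambda>_. {..v}). kP C m L \<sigma> + kQ C m L \<sigma>"])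
       (use assms in auto)
  finally have "kP C m L \<sigma> + kQ C m L \<sigma> \<le> Phi C m v" unfolding Phi_def by simp
  thus "kP C m L \<sigma> \<le> Phi C m v" "kQ C m L \<sigma> \<le> Phi C m v" by auto
qed

end

locale GG = LL +
  fixes g :: "nat \<Rightarrow> nat"
  assumes gmono: "mono g" and gf1: "\<And>m. f1 m \<le> g m"
    and greq: "\<And>C. C \<in> B \<Longrightarrow> \<exists>N. \<forall>n\<ge>N. Phi C (Suc n) (g n) \<le> g (Suc n)"
begin

definition X where "X = (\<Union>n. S n (g n))"

lemma X_sub: "X \<subseteq> D" unfolding X_def using B_sub[OF SB] by blast

lemma restr_mem: "L \<le> Suc n \<Longrightarrow> restrict g {..<L} \<in> PiE {..<L} (\<lambda>_. {..g n})"
  using gmono unfolding mono_def by auto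

lemma req: assumes C: "C \<in> B"
  shows "\<exists>N. \<forall>m>N. fA C m \<le> g m \<and> (\<forall>L\<le>m. infinite (C - U L g) \<longrightarrow>
            \<nu> (S m (g m)) \<le> \<nu> (C - U L g) / 2^(m+2) \<and> dpt C L (restrict g {..<L}) \<notin> S m (g m))"
proof -
  obtain N where N: "\<forall>n\<ge>N. Phi C (Suc n) (g n) \<le> g (Suc n)" using greq[OF C] by auto
  have "fA C m \<le> g m \<and> (\<forall>L\<le>m. infinite (C - U L g) \<longrightarrow>
            \<nu> (S m (g m)) \<le> \<nu> (C - U L g) / 2^(m+2) \<and> dpt C L (restrict g {..<L}) \<notin> S m (g m))"
    if m: "m > N" for m
  proof -
    obtain n where n: "m = Suc n" "n \<ge> N" using m by (cases m) auto
    have ph: "Phi C m (g n) \<le> g m" using N n by auto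
    show ?thesis
    proof (intro conjI allI impI)
      show "fA C m \<le> g m" using Phi_ge(1)[of 0 m "\<lambda>_. undefined" "g n" C] ph by auto
    next
      fix L assume L: "L \<le> m" and inf: "infinite (C - U L g)"
      let ?s = "restrict g {..<L}"
      have mem: "?s \<in> PiE {..<L} (\<lambda>_. {..g n})" using restr_mem L n by auto
      have inf': "infinite (C - U L ?s)" using inf U_restrict by simp
      have "kP C m L ?s \<le> g m" using Phi_ge(2)[OF L mem, of C] ph by auto
      from kP[OF inf' C this] show "\<nu> (S m (g m)) \<le> \<nu> (C - U L g) / 2^(m+2)"
        using U_restrict by simp
      have "kQ C m L ?s \<le> g m" using Phi_ge(3)[OF L mem, of C] ph by auto
      hence "kd m (dpt C L ?s) \<le> g m" using inf' unfolding kQ_def by simp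
      thus "dpt C L ?s \<notin> S m (g m)" using kd Smono by blast
    qed
  qed
  thus ?thesis by blast
qed


lemma U_sub_X: "U j g \<subseteq> X" unfolding U_def X_def by auto

lemma Q: assumes e: "e \<in> B" and eX: "e \<subseteq> X" shows "\<exists>j. finite (e - U j g)"
proof (rule ccontr)
  assume "\<not> ?thesis"
  hence inf: "\<And>j. infinite (e - U j g)" by auto
  obtain N where N: "\<forall>m>N. fA e m \<le> g m \<and> (\<forall>L\<le>m. infinite (e - U L g) \<longrightarrow>
            \<nu> (S m (g m)) \<le> \<nu> (e - U L g) / 2^(m+2) \<and> dpt e L (restrict g {..<L}) \<notin> S m (g m))"
    using req[OF e] by auto
  define L where "L = Suc N"
  define d where "d = dpt e L (restrict g {..<L})"
  have "d \<in> e - U L g" unfolding d_def using dpt[of e L "restrict g {..<L}"] inf[of L] U_restrict by simp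
  hence d: "d \<in> e" "d \<notin> U L g" by auto
  then obtain m where m: "d \<in> S m (g m)" using eX unfolding X_def by auto
  show False
  proof (cases "m < L")
    case True thus False using m d(2) unfolding U_def by auto
  next
    case False
    hence "m > N" "L \<le> m" unfolding L_def by auto
    thus False using N m inf[of L] unfolding d_def by blast
  qed
qed

lemma a_step: "C \<in> B \<Longrightarrow> \<nu> (C - U (Suc j) g) \<ge> \<nu> (C - U j g) - \<nu> (S j (g j))"
proof -
  assume C: "C \<in> B"
  have "C - U (Suc j) g = (C - U j g) - S j (g j)" using U_Suc by auto
  thus ?thesis using nu_Diff_ge[OF B_Diff[OF C U_B] SB] by simp
qed

lemma a_anti: "C \<in> B \<Longrightarrow> j \<le> j' \<Longrightarrow> \<nu> (C - U j' g) \<le> \<nu> (C - U j g)"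
  by (rule nu_mono) (use U_mono[of j j' g] in \<open>auto intro: B_Diff U_B\<close>)

lemma P: assumes C: "C \<in> B" and inf: "infinite (C - X)"
  shows "\<exists>\<delta>>0. \<forall>j. \<delta> \<le> \<nu> (C - U j g)"
proof -
  obtain N where N: "\<forall>m>N. fA C m \<le> g m \<and> (\<forall>L\<le>m. infinite (C - U L g) \<longrightarrow>
            \<nu> (S m (g m)) \<le> \<nu> (C - U L g) / 2^(m+2) \<and> dpt C L (restrict g {..<L}) \<notin> S m (g m))"
    using req[OF C] by auto
  define a where "a j = \<nu> (C - U j g)" for j
  have infj: "infinite (C - U j g)" for j
    using inf U_sub_X[of j] by (meson Diff_mono finite_subset order_refl)
  define N0 where "N0 = Suc N"
  have apos: "0 < a N0" unfolding a_def by (rule nu_pos[OF B_Diff[OF C U_B] infj])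
  have stp: "a (Suc m) \<ge> a m - a m / 2^(m+2)" if "m \<ge> N0" for m
  proof -
    have "\<nu> (S m (g m)) \<le> a m / 2^(m+2)" using N that infj[of m] unfolding a_def N0_def by auto
    thus ?thesis using a_step[OF C, of m] unfolding a_def by linarith
  qed
  have main: "a n \<ge> a N0 * (1/2 + 1/2^(n+1))" if "n \<ge> N0" for n
    using that
  proof (induct n rule: dec_induct)
    case base
    have "(1::real)/2^(N0+1) \<le> 1/2" by (simp add: field_simps)
    hence "1/2 + 1/2^(N0+1) \<le> (1::real)" by linarith
    thus ?case using apos by (simp add: mult_le_cancel_left1)
  next
    case (step n)
    have an: "a n \<le> a N0" unfolding a_def using a_anti[OF C step(1)] .
    have "a n / 2^(n+2) \<le> a N0 / 2^(n+2)" using an by (simp add: divide_right_mono)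
    hence "a (Suc n) \<ge> a n - a N0 / 2^(n+2)" using stp[OF step(1)] by linarith
    moreover have "a N0 * (1/2 + 1/2^(n+1)) - a N0 / 2^(n+2) = a N0 * (1/2 + 1/2^(Suc n+1))"
      by (simp add: field_simps)
    ultimately show ?case using step(3) by linarith
  qed
  show ?thesis
  proof (intro exI[of _ "a N0 / 2"] conjI allI)
    show "0 < a N0 / 2" using apos by simp
    fix j
    show "a N0 / 2 \<le> \<nu> (C - U j g)"
    proof (cases "j \<le> N0")
      case True thus ?thesis using a_anti[OF C True] apos unfolding a_def by linarith
    next
      case False
      hence "a j \<ge> a N0 * (1/2 + 1/2^(j+1))" using main by auto
      moreover have "a N0 * (1/2 + 1/2^(j+1)) \<ge> a N0 / 2" using apos by (simp add: field_simps)
      ultimately show ?thesis unfolding a_def by linarith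
    qed
  qed
qed

lemma U_small: "\<nu> (U j g) \<le> 1/2 - 1/2^(j+1)"
proof (induct j)
  case 0 thus ?case using nu_finite[OF B_empty] by (simp add: U_def)
next
  case (Suc j)
  have "\<nu> (U (Suc j) g) \<le> \<nu> (U j g) + \<nu> (S j (g j))" unfolding U_Suc by (rule nu_Un_le[OF U_B SB])
  moreover have "\<nu> (S j (g j)) \<le> 1/2^(j+2)" by (rule f1[OF gf1])
  moreover have "(1::real)/2 - 1/2^(j+1) + 1/2^(j+2) = 1/2 - 1/2^(Suc j + 1)" by (simp add: field_simps)
  ultimately show ?case using Suc by linarith
qed

lemma R1: "infinite (D - X)"
proof
  assume fin: "finite (D - X)"
  define e where "e = D - (D - X)"
  have eB: "e \<in> B" unfolding e_def by (rule B_Diff[OF B_D finB[OF fin]]) auto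
  have "e \<subseteq> X" unfolding e_def by auto
  then obtain j where j: "finite (e - U j g)" using Q[OF eB] by auto
  have "D - U j g \<subseteq> (e - U j g) \<union> (D - X)" unfolding e_def by auto
  hence "finite (D - U j g)" using j fin finite_subset by blast
  hence "\<nu> (D - U j g) = 0" using nu_finite B_Diff[OF B_D U_B] by blast
  moreover have "\<nu> (D - U j g) \<ge> 1 - \<nu> (U j g)" using nu_Diff_ge[OF B_D U_B] nuD by simp
  moreover have "(1::real)/2^(j+1) > 0" by simp
  ultimately show False using U_small[of j] by linarith
qed

lemma R2: assumes A: "A \<in> B" and inf: "infinite (A \<inter> X)"
  shows "\<exists>b\<in>B. b \<subseteq> A \<inter> X \<and> infinite b"
proof (cases "\<exists>m. \<forall>k. infinite (A \<inter> S m k)")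
  case True
  then obtain m where "infinite (A \<inter> S m (g m))" by auto
  moreover have "A \<inter> S m (g m) \<subseteq> A \<inter> X" unfolding X_def by auto
  ultimately show ?thesis using B_Int[OF A SB] by blast
next
  case False
  hence ex: "\<And>m. \<exists>k. A \<inter> S m k = {}" using fin_to_empty by blast
  obtain N where N: "\<forall>m>N. fA A m \<le> g m" using req[OF A] by auto
  have "A \<inter> X \<subseteq> A \<inter> U (Suc N) g"
  proof
    fix x assume x: "x \<in> A \<inter> X"
    then obtain m where m: "x \<in> S m (g m)" unfolding X_def by auto
    show "x \<in> A \<inter> U (Suc N) g"
    proof (cases "m < Suc N")
      case True thus ?thesis using x m unfolding U_def by auto
    next
      case False
      hence "A \<inter> S m (g m) = {}" using fA[OF ex] N by auto
      thus ?thesis using x m by auto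
    qed
  qed
  hence "A \<inter> X = A \<inter> U (Suc N) g" using U_sub_X by auto
  thus ?thesis using inf B_Int[OF A U_B] by auto
qed

lemma R3: assumes C: "C \<in> B" and inf: "infinite (C - X)"
  shows "\<exists>\<delta>>0. \<forall>e\<in>B. e \<subseteq> C \<inter> X \<longrightarrow> \<nu> e \<le> \<nu> C - \<delta>"
proof -
  obtain \<delta> where d: "\<delta> > 0" "\<And>j. \<delta> \<le> \<nu> (C - U j g)" using P[OF C inf] by auto
  have "\<nu> e \<le> \<nu> C - \<delta>" if e: "e \<in> B" "e \<subseteq> C \<inter> X" for e
  proof -
    obtain j where j: "finite (e - U j g)" using Q[OF e(1)] e(2) by auto
    have "\<nu> e = \<nu> (e \<inter> U j g) + \<nu> (e - U j g)" by (rule nu_split[OF e(1) U_B])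
    also have "\<nu> (e - U j g) = 0" using nu_finite[OF B_Diff[OF e(1) U_B] j] .
    also have "\<nu> (e \<inter> U j g) \<le> \<nu> (C \<inter> U j g)"
      by (rule nu_mono) (use e in \<open>auto intro: B_Int U_B C\<close>)
    also have "\<nu> (C \<inter> U j g) = \<nu> C - \<nu> (C - U j g)" using nu_split[OF C U_B, of j g] by simp
    finally show ?thesis using d(2)[of j] by linarith
  qed
  thus ?thesis using d(1) by blast
qed

end

locale EXT = LL +
  fixes X :: "'a set"
  assumes XD: "X \<subseteq> D"
    and R2: "\<And>A. A \<in> B \<Longrightarrow> infinite (A \<inter> X) \<Longrightarrow> \<exists>b\<in>B. b \<subseteq> A \<inter> X \<and> infinite b"
    and R3: "\<And>C. C \<in> B \<Longrightarrow> infinite (C - X) \<Longrightarrow> \<exists>\<delta>>0. \<forall>e\<in>B. e \<subseteq> C \<inter> X \<longrightarrow> \<nu> e \<le> \<nu> C - \<delta>"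
begin

definition iota :: "'a set \<Rightarrow> real" where
  "iota Y = Sup {\<nu> b | b. b \<in> B \<and> b \<subseteq> Y}"

lemma iota_bdd: "bdd_above {\<nu> b | b. b \<in> B \<and> b \<subseteq> Y}"
  by (rule bdd_aboveI[of _ 1]) (auto intro: nu_le1)
lemma iota_ne: "{\<nu> b | b. b \<in> B \<and> b \<subseteq> Y} \<noteq> {}"
  using B_empty by blast

lemma iota_ge: "b \<in> B \<Longrightarrow> b \<subseteq> Y \<Longrightarrow> \<nu> b \<le> iota Y"
  unfolding iota_def by (rule cSup_upper[OF _ iota_bdd]) blast

lemma iota_le: "(\<And>b. b \<in> B \<Longrightarrow> b \<subseteq> Y \<Longrightarrow> \<nu> b \<le> r) \<Longrightarrow> iota Y \<le> r"
  unfolding iota_def by (rule cSup_least[OF iota_ne]) blast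

lemma iota_nonneg: "0 \<le> iota Y"
  using iota_ge[OF B_empty, of Y] nu_finite[OF B_empty] by simp

lemma iota_B: "b \<in> B \<Longrightarrow> iota b = \<nu> b"
  by (rule antisym[OF iota_le iota_ge]) (auto intro: nu_mono)

lemma iota_le_nu: "c \<in> B \<Longrightarrow> iota (c \<inter> X) \<le> \<nu> c"
  by (rule iota_le) (auto intro: nu_mono)

lemma iota_finite: "finite Y \<Longrightarrow> iota Y = 0"
  by (rule antisym[OF iota_le iota_nonneg]) (metis nu_finite finite_subset order_refl)

lemma iota_add: assumes a1: "a1 \<in> B" and a2: "a2 \<in> B" and dj: "a1 \<inter> a2 = {}"
  shows "iota ((a1 \<union> a2) \<inter> X) = iota (a1 \<inter> X) + iota (a2 \<inter> X)"
proof (rule antisym)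
  show "iota ((a1 \<union> a2) \<inter> X) \<le> iota (a1 \<inter> X) + iota (a2 \<inter> X)"
  proof (rule iota_le)
    fix b assume b: "b \<in> B" "b \<subseteq> (a1 \<union> a2) \<inter> X"
    have "b = (b \<inter> a1) \<union> (b \<inter> a2)" using b by auto
    hence "\<nu> b = \<nu> (b \<inter> a1) + \<nu> (b \<inter> a2)"
      using nu_add[OF B_Int[OF b(1) a1] B_Int[OF b(1) a2]] dj by auto
    moreover have "\<nu> (b \<inter> a1) \<le> iota (a1 \<inter> X)" by (rule iota_ge) (use b a1 B_Int in auto)
    moreover have "\<nu> (b \<inter> a2) \<le> iota (a2 \<inter> X)" by (rule iota_ge) (use b a2 B_Int in auto)
    ultimately show "\<nu> b \<le> iota (a1 \<inter> X) + iota (a2 \<inter> X)" by linarith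
  qed
next
  have "iota (a1 \<inter> X) \<le> iota ((a1 \<union> a2) \<inter> X) - iota (a2 \<inter> X)"
  proof (rule iota_le)
    fix b1 assume b1: "b1 \<in> B" "b1 \<subseteq> a1 \<inter> X"
    have "iota (a2 \<inter> X) \<le> iota ((a1 \<union> a2) \<inter> X) - \<nu> b1"
    proof (rule iota_le)
      fix b2 assume b2: "b2 \<in> B" "b2 \<subseteq> a2 \<inter> X"
      have "\<nu> (b1 \<union> b2) = \<nu> b1 + \<nu> b2" by (rule nu_add[OF b1(1) b2(1)]) (use b1 b2 dj in auto)
      moreover have "\<nu> (b1 \<union> b2) \<le> iota ((a1 \<union> a2) \<inter> X)"
        by (rule iota_ge) (use b1 b2 B_Un in auto)
      ultimately show "\<nu> b2 \<le> iota ((a1 \<union> a2) \<inter> X) - \<nu> b1" by linarith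
    qed
    thus "\<nu> b1 \<le> iota ((a1 \<union> a2) \<inter> X) - iota (a2 \<inter> X)" by linarith
  qed
  thus "iota (a1 \<inter> X) + iota (a2 \<inter> X) \<le> iota ((a1 \<union> a2) \<inter> X)" by linarith
qed

definition kappa :: "'a set \<Rightarrow> real" where
  "kappa c = \<nu> c - iota (c \<inter> X)"

lemma kappa_nonneg: "c \<in> B \<Longrightarrow> 0 \<le> kappa c"
  unfolding kappa_def using iota_le_nu by simp

lemma kappa_add: "c1 \<in> B \<Longrightarrow> c2 \<in> B \<Longrightarrow> c1 \<inter> c2 = {} \<Longrightarrow> kappa (c1 \<union> c2) = kappa c1 + kappa c2"
  unfolding kappa_def using nu_add iota_add by simp

lemma kappa_X: "c \<in> B \<Longrightarrow> c \<subseteq> X \<Longrightarrow> kappa c = 0"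
  unfolding kappa_def using iota_B by (simp add: Int_absorb2)

lemma kappa_inv1: assumes c: "c \<in> B" and c': "c' \<in> B" and eq: "c - X = c' - X"
  shows "kappa c = kappa (c \<inter> c')"
proof -
  have "c = (c \<inter> c') \<union> (c - c')" by auto
  hence "kappa c = kappa (c \<inter> c') + kappa (c - c')"
    using kappa_add[OF B_Int[OF c c'] B_Diff[OF c c']] by (metis Diff_disjoint inf_assoc inf_bot_right Diff_Int_distrib)
  moreover have "kappa (c - c') = 0" by (rule kappa_X[OF B_Diff[OF c c']]) (use eq in blast)
  ultimately show ?thesis by simp
qed

lemma kappa_inv: "c \<in> B \<Longrightarrow> c' \<in> B \<Longrightarrow> c - X = c' - X \<Longrightarrow> kappa c = kappa c'"
  using kappa_inv1[of c c'] kappa_inv1[of c' c] by (simp add: Int_commute)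

lemma kappa_pos: assumes C: "C \<in> B" and inf: "infinite (C - X)" shows "0 < kappa C"
proof -
  obtain \<delta> where d: "\<delta> > 0" "\<forall>e\<in>B. e \<subseteq> C \<inter> X \<longrightarrow> \<nu> e \<le> \<nu> C - \<delta>" using R3[OF C inf] by auto
  have "iota (C \<inter> X) \<le> \<nu> C - \<delta>" by (rule iota_le) (use d in auto)
  thus ?thesis unfolding kappa_def using d(1) by linarith
qed

definition G :: "'a set set" where
  "G = {E. \<exists>A\<in>B. \<exists>C\<in>B. E = (A \<inter> X) \<union> (C - X)}"

lemma G_alg: "is_alg D G"
  unfolding is_alg_def
proof (intro conjI ballI)
  show "G \<subseteq> Pow D" unfolding G_def using B_sub XD by blast
  show "{} \<in> G" unfolding G_def using B_empty by blast
next
  fix a assume "a \<in> G"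
  then obtain A C where AC: "A \<in> B" "C \<in> B" "a = (A \<inter> X) \<union> (C - X)" unfolding G_def by auto
  have "D - a = ((D - A) \<inter> X) \<union> ((D - C) - X)" using AC XD by auto
  thus "D - a \<in> G" unfolding G_def using AC B_compl by blast
next
  fix a b assume "a \<in> G" "b \<in> G"
  then obtain A C A' C' where AC: "A \<in> B" "C \<in> B" "a = (A \<inter> X) \<union> (C - X)"
    "A' \<in> B" "C' \<in> B" "b = (A' \<inter> X) \<union> (C' - X)" unfolding G_def by blast
  have "a \<union> b = ((A \<union> A') \<inter> X) \<union> ((C \<union> C') - X)" using AC by auto
  thus "a \<union> b \<in> G" unfolding G_def using AC B_Un by blast
qed

lemma gen_sub_G: "gen_alg D (B \<union> {X}) \<subseteq> G"
proof -
  have "B \<subseteq> G"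
  proof
    fix A assume A: "A \<in> B"
    have "A = (A \<inter> X) \<union> (A - X)" by auto
    thus "A \<in> G" unfolding G_def using A by blast
  qed
  moreover have "X \<in> G"
  proof -
    have "X = (D \<inter> X) \<union> ({} - X)" using XD by auto
    thus ?thesis unfolding G_def using B_D B_empty by blast
  qed
  ultimately show ?thesis unfolding gen_alg_def using G_alg by blast
qed

definition nu' :: "'a set \<Rightarrow> real" where
  "nu' E = iota (E \<inter> X) + kappa (SOME c. c \<in> B \<and> c - X = E - X)"

lemma nu'_eq: assumes A: "A \<in> B" and C: "C \<in> B"
  shows "nu' ((A \<inter> X) \<union> (C - X)) = iota (A \<inter> X) + kappa C"
proof -
  let ?E = "(A \<inter> X) \<union> (C - X)"
  have e1: "?E \<inter> X = A \<inter> X" by auto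
  have e2: "?E - X = C - X" by auto
  define c where "c = (SOME c. c \<in> B \<and> c - X = ?E - X)"
  have "c \<in> B \<and> c - X = ?E - X" unfolding c_def by (rule someI[of _ C]) (use C e2 in auto)
  hence "kappa c = kappa C" using kappa_inv[OF _ C] e2 by auto
  thus ?thesis unfolding nu'_def c_def[symmetric] e1 by simp
qed

lemma nu'_ext: "A \<in> B \<Longrightarrow> nu' A = \<nu> A"
proof -
  assume A: "A \<in> B"
  have "A = (A \<inter> X) \<union> (A - X)" by auto
  hence "nu' A = iota (A \<inter> X) + kappa A" using nu'_eq[OF A A] by metis
  thus ?thesis unfolding kappa_def by simp
qed

lemma nu'_add: assumes a: "a \<in> G" and b: "b \<in> G" and dj: "a \<inter> b = {}"
  shows "nu' (a \<union> b) = nu' a + nu' b"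
proof -
  obtain A1 C1 A2 C2 where AC: "A1 \<in> B" "C1 \<in> B" "a = (A1 \<inter> X) \<union> (C1 - X)"
    "A2 \<in> B" "C2 \<in> B" "b = (A2 \<inter> X) \<union> (C2 - X)" using a b unfolding G_def by blast
  have u: "a \<union> b = ((A1 \<union> (A2 - A1)) \<inter> X) \<union> ((C1 \<union> (C2 - C1)) - X)" using AC by auto
  have i1: "(A2 - A1) \<inter> X = A2 \<inter> X" using AC dj by auto
  have i2: "(C2 - C1) - X = C2 - X" using AC dj by auto
  have "nu' (a \<union> b) = iota ((A1 \<union> (A2 - A1)) \<inter> X) + kappa (C1 \<union> (C2 - C1))"
    unfolding u by (rule nu'_eq) (use AC B_Un B_Diff in auto)
  also have "iota ((A1 \<union> (A2 - A1)) \<inter> X) = iota (A1 \<inter> X) + iota (A2 \<inter> X)"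
    using iota_add[OF AC(1) B_Diff[OF AC(4) AC(1)]] i1 by auto
  also have "kappa (C1 \<union> (C2 - C1)) = kappa C1 + kappa C2"
    using kappa_add[OF AC(2) B_Diff[OF AC(5) AC(2)]] kappa_inv[OF B_Diff[OF AC(5) AC(2)] AC(5) i2] by auto
  finally show ?thesis using nu'_eq AC by simp
qed

lemma nu'_nonneg: "a \<in> G \<Longrightarrow> 0 \<le> nu' a"
  unfolding G_def using nu'_eq iota_nonneg kappa_nonneg by fastforce

lemma nu'_zero: assumes a: "a \<in> G" shows "nu' a = 0 \<longleftrightarrow> finite a"
proof -
  obtain A C where AC: "A \<in> B" "C \<in> B" "a = (A \<inter> X) \<union> (C - X)" using a unfolding G_def by blast
  have v: "nu' a = iota (A \<inter> X) + kappa C" using nu'_eq AC by simp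
  show ?thesis
  proof
    assume fin: "finite a"
    have f1: "finite (A \<inter> X)" using fin AC by (auto intro: finite_subset)
    have f2: "finite (C - X)" using fin AC by (auto intro: finite_subset)
    have cB: "C - X \<in> B" by (rule finB[OF f2]) (use B_sub[OF AC(2)] in auto)
    have "kappa C = kappa (C - X)" by (rule kappa_inv[OF AC(2) cB]) auto
    also have "\<dots> \<le> \<nu> (C - X)" unfolding kappa_def using iota_nonneg by simp
    also have "\<dots> = 0" using nu_finite[OF cB f2] .
    finally show "nu' a = 0" using v iota_finite[OF f1] kappa_nonneg[OF AC(2)] by linarith
  next
    assume z: "nu' a = 0"
    show "finite a"
    proof (rule ccontr)
      assume "infinite a"
      hence "infinite (A \<inter> X) \<or> infinite (C - X)" using AC by auto
      thus False
      proof
        assume "infinite (A \<inter> X)"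
        then obtain b where b: "b \<in> B" "b \<subseteq> A \<inter> X" "infinite b" using R2[OF AC(1)] by auto
        have "0 < iota (A \<inter> X)" using iota_ge[OF b(1,2)] nu_pos[OF b(1,3)] by linarith
        thus False using z v kappa_nonneg[OF AC(2)] by linarith
      next
        assume "infinite (C - X)"
        thus False using kappa_pos[OF AC(2)] z v iota_nonneg[of "A \<inter> X"] by linarith
      qed
    qed
  qed
qed

lemma ext_main:
  "\<exists>\<nu>'. fin_add_measure (gen_alg D (B \<union> {X})) \<nu>' \<and>
        almost_strictly_positive (gen_alg D (B \<union> {X})) \<nu>' \<and> (\<forall>A\<in>B. \<nu>' A = \<nu> A)"
proof (intro exI[of _ nu'] conjI ballI)
  show "fin_add_measure (gen_alg D (B \<union> {X})) nu'"
    unfolding fin_add_measure_def using gen_sub_G nu'_nonneg nu'_add by blast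
  show "almost_strictly_positive (gen_alg D (B \<union> {X})) nu'"
    unfolding almost_strictly_positive_def using gen_sub_G nu'_zero by blast
  fix A assume "A \<in> B" thus "nu' A = \<nu> A" by (rule nu'_ext)
qed

end

lemma dom_image: assumes "card_less_b B" shows "dominated (\<psi> ` B)"
proof (rule ccontr)
  assume "\<not> dominated (\<psi> ` B)"
  hence "(card_of B, card_of (\<psi> ` B)) \<in> ordLess" using assms unfolding card_less_b_def by blast
  hence "(card_of B, card_of B) \<in> ordLess" using ordLess_ordLeq_trans card_of_image by blast
  thus False using ordLess_irreflexive by blast
qed

context LL begin

lemma exists_g:
  assumes dom: "dominated ((\<lambda>C w. \<Sum>m\<le>w. \<Sum>v\<le>w. Phi C m v) ` B)"
  shows "\<exists>g. mono g \<and> (\<forall>m. f1 m \<le> g m) \<and> (\<forall>C\<in>B. \<exists>N. \<forall>n\<ge>N. Phi C (Suc n) (g n) \<le> g (Suc n))"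
proof -
  obtain h where h: "\<forall>C\<in>B. \<exists>N. \<forall>w\<ge>N. (\<Sum>m\<le>w. \<Sum>v\<le>w. Phi C m v) \<le> h w"
    using dom unfolding dominated_def by auto
  define g where "g = rec_nat (f1 0) (\<lambda>n gn. h (gn + Suc n) + f1 (Suc n) + gn + 1)"
  have g0: "g 0 = f1 0" and gS: "\<And>n. g (Suc n) = h (g n + Suc n) + f1 (Suc n) + g n + 1"
    unfolding g_def by simp_all
  have "mono g" by (rule incseq_SucI) (simp add: gS)
  moreover have "\<forall>m. f1 m \<le> g m" by (intro allI, case_tac m) (simp_all add: g0 gS)
  moreover have "\<forall>C\<in>B. \<exists>N. \<forall>n\<ge>N. Phi C (Suc n) (g n) \<le> g (Suc n)"
  proof
    fix C assume C: "C \<in> B"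
    obtain N where N: "\<forall>w\<ge>N. (\<Sum>m\<le>w. \<Sum>v\<le>w. Phi C m v) \<le> h w" using h C by auto
    have "Phi C (Suc n) (g n) \<le> g (Suc n)" if n: "n \<ge> N" for n
    proof -
      let ?w = "g n + Suc n"
      have "Phi C (Suc n) (g n) \<le> (\<Sum>v\<le>?w. Phi C (Suc n) v)"
        by (rule member_le_sum[where f = "\<lambda>v. Phi C (Suc n) v"]) auto
      also have "\<dots> \<le> (\<Sum>m\<le>?w. \<Sum>v\<le>?w. Phi C m v)"
        by (rule member_le_sum[where f = "\<lambda>m. \<Sum>v\<le>?w. Phi C m v"]) auto
      also have "\<dots> \<le> h ?w" using N n by (simp del: sum.atMost_Suc add_Suc_right)
      finally show ?thesis using gS[of n] by linarith
    qed
    thus "\<exists>N. \<forall>n\<ge>N. Phi C (Suc n) (g n) \<le> g (Suc n)" by blast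
  qed
  ultimately show ?thesis by blast
qed

end

lemma gen_alg_gen: "x \<in> G \<Longrightarrow> x \<in> gen_alg D G"
  unfolding gen_alg_def by blast

theorem lemma4p3:
  fixes D :: "(nat \<Rightarrow> bool) set"
    and B :: "(nat \<Rightarrow> bool) set set"
    and \<nu> :: "(nat \<Rightarrow> bool) set \<Rightarrow> real"
    and S :: "nat \<Rightarrow> nat \<Rightarrow> (nat \<Rightarrow> bool) set"
  assumes "countable D" and "closure D = UNIV"
    and "is_alg D B" and "card_less_b B" and "A0 D \<subseteq> B"
    and "fin_add_measure B \<nu>" and "almost_strictly_positive B \<nu>" and "\<nu> D = 1"
    and "\<forall>A\<in>A0 D. \<nu> A = mu0 D A"
    and "s_family D S"
  shows "\<exists>g::nat \<Rightarrow> nat. infinite (D - (\<Union>n. S n (g n))) \<and>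
           (\<exists>\<nu>'. fin_add_measure (gen_alg D (B \<union> {\<Union>n. S n (g n)})) \<nu>' \<and>
                 almost_strictly_positive (gen_alg D (B \<union> {\<Union>n. S n (g n)})) \<nu>' \<and>
                 (\<forall>A\<in>B. \<nu>' A = \<nu> A))"
proof -
  note sf = assms(10)[unfolded s_family_def]
  have SA: "S n k \<in> A0 D" for n k using sf by blast
  interpret LL D B \<nu> S
  proof
    show "is_alg D B" "fin_add_measure B \<nu>" "almost_strictly_positive B \<nu>" "\<nu> D = 1"
      using assms by auto
    show "\<And>F. finite F \<Longrightarrow> F \<subseteq> D \<Longrightarrow> F \<in> B"
      using assms(5) unfolding A0_def by (blast intro: gen_alg_gen)
    show "\<And>n k. S n k \<in> B" using SA assms(5) by blast
    show "\<And>n k. S n (Suc k) \<subseteq> S n k" "\<And>n. (\<Inter>k. S n k) = {}" using sf by auto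
    show "(\<lambda>k. \<nu> (S n k)) \<longlonglongrightarrow> 0" for n using sf SA assms(9) by simp
  qed
  obtain g where g: "mono g" "\<forall>m. f1 m \<le> g m" "\<forall>C\<in>B. \<exists>N. \<forall>n\<ge>N. Phi C (Suc n) (g n) \<le> g (Suc n)"
    using exists_g[OF dom_image[OF assms(4)]] by blast
  interpret GG D B \<nu> S g
    by unfold_locales (use g in auto)
  interpret EXT D B \<nu> S X
    by unfold_locales (use X_sub R2 R3 in auto)
  show ?thesis using R1 ext_main unfolding X_def by blast
qed

end
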